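(* Let $G=(V,A)$, $\Xi$ and $\mathcal{S}^1$ be as in the context. Let $\bar{T}$ be a tree in the undirected graph $\bar{G}$ underlying $G$ with node set $\widetilde{\mathcal{I}}\subseteq V$, and let $l\in A$ be an arc that is incident to exactly one node of $\bar{T}$. Then for any partition $\widetilde{\mathcal{I}}_1,\widetilde{\mathcal{I}}_2$ of $\widetilde{\mathcal{I}}$ (i.e. $\widetilde{\mathcal{I}}_1\cap\widetilde{\mathcal{I}}_2=\emptyset$, $\widetilde{\mathcal{I}}_1\cup\widetilde{\mathcal{I}}_2=\widetilde{\mathcal{I}}$): (i) if $h(l)\in\widetilde{\mathcal{I}}$, then $[\{i^+\}_{i\in\widetilde{\mathcal{I}}_1},\{i^-\}_{i\in\widetilde{\mathcal{I}}_2}]$ is an EC\&R assignment for class-$l^+$; (ii) if $h(l)\in\widetilde{\mathcal{I}}$, then $[\{i^-\}_{i\in\widetilde{\mathcal{I}}_1},\{i^+\}_{i\in\widetilde{\mathcal{I}}_2}]$ is an EC\&R assignment for class-$l^-$; (iii) if $t(l)\in\widetilde{\mathcal{I}}$, then $[\{i^-\}_{i\in\widetilde{\mathcal{I}}_1},\{i^+\}_{i\in\widetilde{\mathcal{I}}_2}]$ is an EC\&R assignment for class-$l^+$; (iv) if $t(l)\in\widetilde{\mathcal{I}}$, then $[\{i^+\}_{i\in\widetilde{\mathcal{I}}_1},\{i^-\}_{i\in\widetilde{\mathcal{I}}_2}]$ is an EC\&R assignment for class-$l^-$.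
   Context: $G=(V,A)$ is a directed network; its arcs are identified with $N=\{1,\dots,n\}$, $x_a$ is the flow on arc $a$, $t(a)$ and $h(a)$ are the tail and head of $a$, and $\delta^+(v),\delta^-(v)$ are the outgoing and incoming arcs of node $v$. $\Xi=\{x\in\mathbb{R}^n: Ex\ge f,\ 0\le x\le u\}$ where the rows $E_{t\cdot}x\ge f_t$, $t\in T$, are: for each $v\in V$, the positive flow-balance inequality (index $v^+$) $\sum_{a\in\delta^+(v)}x_a-\sum_{a\in\delta^-(v)}x_a\ge f_v$ and the negative flow-balance inequality (index $v^-$) $-\sum_{a\in\delta^+(v)}x_a+\sum_{a\in\delta^-(v)}x_a\ge -f_v$; $u$ is the capacity vector. $\mathcal{S}^1=\{(x,y_1,z)\in\Xi\times[0,1]\times\mathbb{R}^A : y_1x_k=z_k\ \forall k\in A\}$. EC\&R assignment (case of a single $y$ variable): a class is a pair $l\in A$ and sign $\sigma\in\{+,-\}$ (class-$l^\sigma$). A pair $[\mathcal{I}_1,\bar{\mathcal{I}}]$ of disjoint subsets of $T$ is an EC\&R assignment for class-$l^\sigma$ if there are positive weights $\gamma_t$ ($t\in\mathcal{I}_1$), $\theta_t$ ($t\in\bar{\mathcal{I}}$) such that, when one sums the base equality $y_1x_l-z_l=0$ multiplied by $+1$ (if $\sigma=+$) or $-1$ (if $\sigma=-$), the inequalities $\gamma_t\,y_1(E_{t\cdot}x-f_t)\ge 0$ for $t\in\mathcal{I}_1$, and $\theta_t(1-y_1)(E_{t\cdot}x-f_t)\ge0$ for $t\in\bar{\mathcal{I}}$,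 the following hold: (C1) at least $|\mathcal{I}_1|+|\bar{\mathcal{I}}|$ bilinear terms $y_1x_i$ are canceled (have coefficient zero in the sum although they appear in some summand); (C2) if $\mathcal{I}_1\cup\bar{\mathcal{I}}\neq\emptyset$, then for each constraint used in the sum (including the base equality), at least one of the bilinear terms created by multiplying it with its weight is canceled. *)

theory Defs
  imports Complex_Main
begin

(* Directed network: vertex set V, arc set A, tail tail, head head.
   Rows of E are indexed by (v, s): (v, Plus) is the positive flow-balance
   inequality v^+, (v, Minus) the negative one v^-. *)

datatype sgn = Plus | Minus

definition sgn_val :: "sgn \<Rightarrow> real" where
  "sgn_val s = (if s = Plus then 1 else -1)"

definition Ecoef :: "('a \<Rightarrow> 'v) \<Rightarrow> ('a \<Rightarrow> 'v) \<Rightarrow> ('v \<times> sgn) \<Rightarrow> 'a \<Rightarrow> real" where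
  "Ecoef tail head r a =
     sgn_val (snd r) * ((if tail a = fst r then 1 else 0) - (if head a = fst r then 1 else 0))"

definition urel :: "('a \<Rightarrow> 'v) \<Rightarrow> ('a \<Rightarrow> 'v) \<Rightarrow> 'a set \<Rightarrow> ('v \<times> 'v) set" where
  "urel tail head F = {(tail a, head a) | a. a \<in> F} \<union> {(head a, tail a) | a. a \<in> F}"

definition is_tree :: "'a set \<Rightarrow> ('a \<Rightarrow> 'v) \<Rightarrow> ('a \<Rightarrow> 'v) \<Rightarrow> 'v set \<Rightarrow> 'a set \<Rightarrow> bool" where
  "is_tree A tail head I F \<longleftrightarrow>
     F \<subseteq> A \<and> I \<noteq> {} \<and>
     (\<forall>a\<in>F. tail a \<in> I \<and> head a \<in> I \<and> tail a \<noteq> head a) \<and>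
     (\<forall>u\<in>I. \<forall>w\<in>I. (u, w) \<in> (urel tail head F)\<^sup>*) \<and>
     (\<forall>e\<in>F. (tail e, head e) \<notin> (urel tail head (F - {e}))\<^sup>*)"

(* Bilinear coefficient of y*x_i in each summand:
     base equality (times sigma):          sigma * [i = l]
     gamma_t * y * (E_t x - f_t):           gamma_t * E_{t,i}
     theta_t * (1-y) * (E_t x - f_t):       - theta_t * E_{t,i}            *)
definition base_coef :: "'a \<Rightarrow> sgn \<Rightarrow> 'a \<Rightarrow> real" where
  "base_coef l \<sigma> i = (if i = l then sgn_val \<sigma> else 0)"

definition ECR_assignment ::
  "'v set \<Rightarrow> 'a set \<Rightarrow> ('a \<Rightarrow> 'v) \<Rightarrow> ('a \<Rightarrow> 'v) \<Rightarrow> 'a \<Rightarrow> sgn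
   \<Rightarrow> ('v \<times> sgn) set \<Rightarrow> ('v \<times> sgn) set \<Rightarrow> bool" where
  "ECR_assignment V A tail head l \<sigma> I1 Ib \<longleftrightarrow>
     I1 \<subseteq> V \<times> UNIV \<and> Ib \<subseteq> V \<times> UNIV \<and> I1 \<inter> Ib = {} \<and>
     (\<exists>\<gamma> \<theta> :: ('v \<times> sgn) \<Rightarrow> real.
        (\<forall>t\<in>I1. \<gamma> t > 0) \<and> (\<forall>t\<in>Ib. \<theta> t > 0) \<and>
        (let total = (\<lambda>i. base_coef l \<sigma> i + (\<Sum>t\<in>I1. \<gamma> t * Ecoef tail head t i)
                                         - (\<Sum>t\<in>Ib. \<theta> t * Ecoef tail head t i));
             appears = (\<lambda>i. base_coef l \<sigma> i \<noteq> 0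
                              \<or> (\<exists>t\<in>I1. \<gamma> t * Ecoef tail head t i \<noteq> 0)
                              \<or> (\<exists>t\<in>Ib. - (\<theta> t * Ecoef tail head t i) \<noteq> 0));
             canceled = {i \<in> A. appears i \<and> total i = 0}
         in card canceled \<ge> card I1 + card Ib \<and>
            (I1 \<union> Ib \<noteq> {} \<longrightarrow>
               (\<exists>i\<in>canceled. base_coef l \<sigma> i \<noteq> 0) \<and>
               (\<forall>t\<in>I1. \<exists>i\<in>canceled. \<gamma> t * Ecoef tail head t i \<noteq> 0) \<and>
               (\<forall>t\<in>Ib. \<exists>i\<in>canceled. - (\<theta> t * Ecoef tail head t i) \<noteq> 0))))"

end

theory Submission
  imports Defs
begin

definition clos :: "('a \<Rightarrow> 'v) \<Rightarrow> ('a \<Rightarrow> 'v) \<Rightarrow> 'a set \<Rightarrow> 'v set \<Rightarrow> 'v set" where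
  "clos tail head F S = {u. \<exists>s\<in>S. (s, u) \<in> (urel tail head F)\<^sup>*}"

lemma clos_sub: "clos tail head F S \<subseteq> S \<union> tail ` F \<union> head ` F"
proof
  fix u assume "u \<in> clos tail head F S"
  then obtain s where s: "s \<in> S" "(s, u) \<in> (urel tail head F)\<^sup>*" unfolding clos_def by blast
  from s(2) show "u \<in> S \<union> tail ` F \<union> head ` F"
  proof (cases rule: rtranclE)
    case base then show ?thesis using s(1) by simp
  next
    case (step y) then show ?thesis unfolding urel_def by auto
  qed
qed

lemma clos_card:
  assumes "finite F" "finite S"
  shows "card (clos tail head F S) \<le> card F + card S"
  using assms
proof (induction F arbitrary: S rule: finite_induct)
  case empty
  have "urel tail head {} = {}" unfolding urel_def by auto
  then have "clos tail head {} S = S" unfolding clos_def by auto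
  then show ?case by simp
next
  case (insert e F)
  let ?a = "tail e" and ?b = "head e"
  let ?R = "urel tail head (insert e F)" and ?R' = "urel tail head F"
  have Rsplit: "?R = ?R' \<union> {(?a, ?b), (?b, ?a)}" unfolding urel_def by auto
  have mono: "clos tail head F X \<subseteq> clos tail head F Y" if "X \<subseteq> Y" for X Y
    using that unfolding clos_def by blast
  have selfc: "X \<subseteq> clos tail head F X" for X unfolding clos_def by blast
  have closed: "w \<in> clos tail head F X" if "u \<in> clos tail head F X" "(u, w) \<in> ?R'" for u w X
    using that unfolding clos_def by (blast intro: rtrancl_into_rtrancl)
  show ?case
  proof (cases "?a \<in> clos tail head F S \<or> ?b \<in> clos tail head F S")
    case True
    then obtain c where c: "c \<in> clos tail head F S" "c = ?a \<or> c = ?b" by blast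
    define d where "d = (if c = ?a then ?b else ?a)"
    have cd: "{(?a, ?b), (?b, ?a)} = {(c, d), (d, c)}" using c(2) unfolding d_def by auto
    let ?C = "clos tail head F (insert d S)"
    have sub: "clos tail head (insert e F) S \<subseteq> ?C"
    proof
      fix u assume "u \<in> clos tail head (insert e F) S"
      then obtain s where s: "s \<in> S" "(s, u) \<in> ?R\<^sup>*" unfolding clos_def by blast
      from s(2) show "u \<in> ?C"
      proof (induction rule: rtrancl_induct)
        case base then show ?case using s(1) selfc by blast
      next
        case (step y z)
        from step(2) Rsplit cd have "(y, z) \<in> ?R' \<or> z = c \<or> z = d" by auto
        then show ?case
        proof (elim disjE)
          assume "(y, z) \<in> ?R'" then show ?thesis using closed step(3) by blast
        next
          assume "z = c" then show ?thesis using c(1) mono[of S "insert d S"] by blast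
        next
          assume "z = d" then show ?thesis using selfc by blast
        qed
      qed
    qed
    have "finite ?C" using clos_sub[of tail head F "insert d S"] insert.hyps(1) insert.prems
      by (meson finite_Un finite_imageI finite_insert finite_subset)
    then have "card (clos tail head (insert e F) S) \<le> card ?C" using sub card_mono by blast
    also have "\<dots> \<le> card F + card (insert d S)" using insert.IH insert.prems by simp
    also have "\<dots> \<le> card (insert e F) + card S"
      using insert.hyps insert.prems by (simp add: card_insert_le_m1 card_insert_if)
    finally show ?thesis .
  next
    case False
    have sub: "clos tail head (insert e F) S \<subseteq> clos tail head F S"
    proof
      fix u assume "u \<in> clos tail head (insert e F) S"
      then obtain s where s: "s \<in> S" "(s, u) \<in> ?R\<^sup>*" unfolding clos_def by blast
      from s(2) show "u \<in> clos tail head F S"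
      proof (induction rule: rtrancl_induct)
        case base then show ?case using s(1) selfc by blast
      next
        case (step y z)
        from step(2) Rsplit have "(y, z) \<in> ?R' \<or> y = ?a \<or> y = ?b" by auto
        then show ?case using False step(3) closed by blast
      qed
    qed
    have "finite (clos tail head F S)" using clos_sub[of tail head F S] insert.hyps(1) insert.prems
      by (meson finite_Un finite_imageI finite_subset)
    then have "card (clos tail head (insert e F) S) \<le> card (clos tail head F S)" using sub card_mono by blast
    also have "\<dots> \<le> card F + card S" using insert.IH insert.prems by simp
    also have "\<dots> \<le> card (insert e F) + card S" using insert.hyps by simp
    finally show ?thesis .
  qed
qed


lemma tree_card:
  assumes "finite A" "is_tree A tail head I F" "v \<in> I"
  shows "card I \<le> card F + 1"
proof -
  have fF: "finite F" using assms(1,2) unfolding is_tree_def by (meson finite_subset)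
  have "I \<subseteq> clos tail head F {v}" using assms(2,3) unfolding is_tree_def clos_def by blast
  moreover have "finite (clos tail head F {v})" using clos_sub[of tail head F "{v}"] fF
    by (meson finite_Un finite_imageI finite_subset finite.intros)
  ultimately have "card I \<le> card (clos tail head F {v})" by (rule card_mono[rotated])
  also have "\<dots> \<le> card F + 1" using clos_card[OF fF, of "{v}"] by simp
  finally show ?thesis .
qed

lemma sgn_val_nz: "sgn_val s \<noteq> 0" by (simp add: sgn_val_def)

lemma main:
  assumes finV: "finite V" and finA: "finite A"
    and arcs: "\<forall>a\<in>A. tail a \<in> V \<and> head a \<in> V \<and> tail a \<noteq> head a"
    and IV: "I \<subseteq> V"
    and tree: "is_tree A tail head I F"
    and lA: "l \<in> A" and ex: "(tail l \<in> I) \<noteq> (head l \<in> I)"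
    and disj: "I1 \<inter> I2 = {}" and un: "I1 \<union> I2 = I"
    and s: "sgn_val s2 = - sgn_val s1"
    and bal: "sgn_val \<sigma> + sgn_val s1 * ((if tail l \<in> I then 1 else 0) - (if head l \<in> I then 1 else 0)) = 0"
  shows "ECR_assignment V A tail head l \<sigma> ((\<lambda>i. (i, s1)) ` I1) ((\<lambda>i. (i, s2)) ` I2)"
proof -
  let ?J1 = "(\<lambda>i. (i, s1)) ` I1" and ?J2 = "(\<lambda>i. (i, s2)) ` I2"
  define D where "D a i = (if tail a = i then 1 else 0) - (if head a = i then (1::real) else 0)" for a i
  have Ec: "Ecoef tail head (i, s) a = sgn_val s * D a i" for i s a by (simp add: Ecoef_def D_def)
  have finI: "finite I" using finV IV finite_subset by blast
  then have finI1: "finite I1" and finI2: "finite I2" using un by auto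
  have inj: "inj_on (\<lambda>i. (i, s)) X" for s X by (simp add: inj_on_def)
  have sumD: "(\<Sum>i\<in>I. D a i) = (if tail a \<in> I then 1 else 0) - (if head a \<in> I then 1 else 0)" for a
    unfolding D_def using finI by (simp add: sum_subtractf)
  have tot: "base_coef l \<sigma> a + (\<Sum>t\<in>?J1. Ecoef tail head t a) - (\<Sum>t\<in>?J2. Ecoef tail head t a)
     = base_coef l \<sigma> a + sgn_val s1 * ((if tail a \<in> I then 1 else 0) - (if head a \<in> I then 1 else 0))" for a
  proof -
    have "(\<Sum>t\<in>?J1. Ecoef tail head t a) = sgn_val s1 * (\<Sum>i\<in>I1. D a i)"
      by (simp add: sum.reindex[OF inj] Ec sum_distrib_left)
    moreover have "(\<Sum>t\<in>?J2. Ecoef tail head t a) = - sgn_val s1 * (\<Sum>i\<in>I2. D a i)"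
      by (simp add: sum.reindex[OF inj] Ec sum_distrib_left s)
    moreover have "(\<Sum>i\<in>I. D a i) = (\<Sum>i\<in>I1. D a i) + (\<Sum>i\<in>I2. D a i)"
      using sum.union_disjoint[OF finI1 finI2 disj] un by simp
    ultimately show ?thesis using sumD[of a] by (simp add: algebra_simps)
  qed
  have tl: "\<forall>a\<in>F. tail a \<in> I \<and> head a \<in> I \<and> tail a \<noteq> head a" "F \<subseteq> A"
    using tree unfolding is_tree_def by auto
  have lF: "l \<notin> F" using tl ex by auto
  have app: "(\<exists>t\<in>?J1. Ecoef tail head t a \<noteq> 0) \<or> (\<exists>t\<in>?J2. Ecoef tail head t a \<noteq> 0)"
    if "a \<in> A" "i \<in> I" "tail a = i \<or> head a = i" for a i
  proof -
    have "D a i \<noteq> 0" using that arcs unfolding D_def by auto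
    then have "Ecoef tail head (i, s) a \<noteq> 0" for s using Ec sgn_val_nz by simp
    then show ?thesis using that(2) un by blast
  qed
  define C where "C = {i \<in> A. (base_coef l \<sigma> i \<noteq> 0 \<or> (\<exists>t\<in>?J1. Ecoef tail head t i \<noteq> 0) \<or> (\<exists>t\<in>?J2. Ecoef tail head t i \<noteq> 0))
      \<and> base_coef l \<sigma> i + (\<Sum>t\<in>?J1. Ecoef tail head t i) - (\<Sum>t\<in>?J2. Ecoef tail head t i) = 0}"
  have lC: "l \<in> C" unfolding C_def using lA tot[of l] bal
    by (simp add: base_coef_def sgn_val_nz)
  have FC: "F \<subseteq> C"
  proof
    fix a assume a: "a \<in> F"
    have "a \<noteq> l" using a lF by auto
    moreover have "a \<in> A" using a tl by auto
    ultimately show "a \<in> C" unfolding C_def using tot[of a] a tl app[of a "tail a"]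
      by (simp add: base_coef_def)
  qed
  obtain v where v: "v \<in> I" "tail l = v \<or> head l = v" using ex by blast
  have cov: "\<exists>a\<in>C. tail a = i \<or> head a = i" if "i \<in> I" for i
  proof (cases "i = v")
    case True then show ?thesis using v lC by blast
  next
    case False
    have "(i, v) \<in> (urel tail head F)\<^sup>*" using tree that v(1) unfolding is_tree_def by blast
    then obtain w where "(i, w) \<in> urel tail head F" using False by (meson converse_rtranclE)
    then obtain a where "a \<in> F" "tail a = i \<or> head a = i" unfolding urel_def by auto
    then show ?thesis using FC by blast
  qed
  have cardJ: "card ?J1 + card ?J2 = card I"
    using card_image[OF inj, of s1 I1] card_image[OF inj, of s2 I2] card_Un_disjoint[OF finI1 finI2 disj] un by simp
  have finC: "finite C" unfolding C_def using finA by simp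
  have "card I \<le> card F + 1" using tree_card[OF finA tree v(1)] .
  also have "\<dots> = card (insert l F)" using lF finite_subset[OF tl(2) finA] by (simp add: card_insert_if)
  also have "\<dots> \<le> card C" using lC FC finC by (simp add: card_mono)
  finally have cardC: "card ?J1 + card ?J2 \<le> card C" using cardJ by simp
  have C2a: "\<exists>i\<in>C. base_coef l \<sigma> i \<noteq> 0" using lC by (auto simp: base_coef_def sgn_val_nz)
  have C2b: "\<exists>i\<in>C. Ecoef tail head t i \<noteq> 0" if tJ: "t \<in> ?J1 \<union> ?J2" for t
  proof -
    obtain i s where t: "t = (i, s)" "i \<in> I" using tJ un by auto
    obtain a where a: "a \<in> C" "tail a = i \<or> head a = i" using cov[OF t(2)] by blast
    have "a \<in> A" using a(1) unfolding C_def by simp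
    then have "D a i \<noteq> 0" using a(2) arcs unfolding D_def by auto
    then show ?thesis using a(1) t(1) Ec sgn_val_nz by auto
  qed
  have "?J1 \<inter> ?J2 = {}" using disj by auto
  moreover have "?J1 \<subseteq> V \<times> UNIV" "?J2 \<subseteq> V \<times> UNIV" using un IV by auto
  ultimately show ?thesis unfolding ECR_assignment_def Let_def
    apply (intro conjI)
       apply (simp_all only:)
    apply (rule exI[of _ "\<lambda>_. 1"], rule exI[of _ "\<lambda>_. 1"])
    apply (simp only: mult_1 neg_equal_0_iff_equal C_def[symmetric])
    using cardC C2a C2b by auto
qed


theorem theorem2:
  fixes V :: "'v set" and A :: "'a set" and tail head :: "'a \<Rightarrow> 'v"
    and I I1 I2 :: "'v set" and F :: "'a set" and l :: 'a
  assumes "finite V" and "finite A"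
    and "\<forall>a\<in>A. tail a \<in> V \<and> head a \<in> V \<and> tail a \<noteq> head a"
    and "I \<subseteq> V"
    and "is_tree A tail head I F"
    and "l \<in> A" and "(tail l \<in> I) \<noteq> (head l \<in> I)"
    and "I1 \<inter> I2 = {}" and "I1 \<union> I2 = I"
  shows "(head l \<in> I \<longrightarrow> ECR_assignment V A tail head l Plus
                          ((\<lambda>i. (i, Plus)) ` I1) ((\<lambda>i. (i, Minus)) ` I2))
       \<and> (head l \<in> I \<longrightarrow> ECR_assignment V A tail head l Minus
                          ((\<lambda>i. (i, Minus)) ` I1) ((\<lambda>i. (i, Plus)) ` I2))
       \<and> (tail l \<in> I \<longrightarrow> ECR_assignment V A tail head l Plus
                          ((\<lambda>i. (i, Minus)) ` I1) ((\<lambda>i. (i, Plus)) ` I2))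
       \<and> (tail l \<in> I \<longrightarrow> ECR_assignment V A tail head l Minus
                          ((\<lambda>i. (i, Plus)) ` I1) ((\<lambda>i. (i, Minus)) ` I2))"
proof -
  have h: "(tail l \<in> I) = (\<not> head l \<in> I)" using assms(7) by auto
  note m = main[OF assms(1-9)]
  show ?thesis
    by (intro conjI impI m) (auto simp: sgn_val_def h)
qed

end
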